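(* Let $\theta$ be the automorphism of $\Lambda$ sending $t$ to $-t$. Then $L_l^\theta\otimes_\Lambda L_r$ (where $L_l^\theta$ is $L_l$ with right $\Lambda$-action twisted by $\theta$) is a $\Psi$-$\Psi$-bimodule isomorphic to $M^\tau$.
   Context: $F$ is a field of characteristic $p>0$. $\Psi$ is the $F$-algebra generated by orthogonal idempotents $e_1,\dots,e_p$ summing to $1$ and $x=\sum_{l=2}^pe_{l-1}xe_l$, $\xi=\sum_{l=2}^pe_{l-1}\xi e_l$, subject to $x\xi=\xi x$, $\xi^2=0$. $L_l$: left $\Psi$-module with basis $\{x.x^l,\xi.x^l\mid0\le l\le p-1\}$, $e_f$ acting as identity on $x.x^{p-f},\xi.x^{p-f}$, $x:x.x^l\mapsto x.x^{l+1}$, $\xi.x^l\mapsto\xi.x^{l+1}$ (zero when the exponent would reach $p$), $\xi:x.x^l\mapsto\xi.x^{l+1}$, $\xi.x^l\mapsto0$. $L_r$: right $\Psi$-module with basis $\{x^l.x,x^l.\xi\mid0\le l\le p-1\}$, $e_l$ acting as identity on $x^{l-1}.x,x^{l-1}.\xi$, $x$ raising the exponent $l$, $\xi:x^l.x\mapsto x^{l+1}.\xi$, $x^l.\xi\mapsto0$. $\Lambda$ is the exterior algebra on $t$, acting on the right of $L_l$ by $x.x^l\mapsto\xi.x^l$, $\xi.x^l\mapsto0$, and on the left of $L_r$ by $x^l.x\mapsto x^l.\xi$, $x^l.\xi\mapsto0$. $M=L_l\otimes_\Lambda L_r$. $\tau$ is the automorphism of $\Psi$ fixing $x$ and sending $\xi$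 to $-\xi$; $M^\tau$ is $M$ with its right $\Psi$-action twisted by $\tau$. *)

theory Defs
  imports Main
begin

text \<open>A basis vector of L_l is indexed by (k,l) with k = False for x.x^l
 and k = True for xi.x^l (0 <= l < p); a basis vector of L_r is indexed by (k,l) with
 k = False for x^l.x and k = True for x^l.xi.  Every generator acts by sending a basis vector to a basis vector or to 0;
 this is encoded as a map into option (None meaning 0).\<close>

type_synonym bas = "bool \<times> nat"

definition Bas :: "nat \<Rightarrow> bas set" where
  "Bas p = UNIV \<times> {..<p}"

text \<open>Generators of Psi: idempotents e_f (1 <= f <= p), x, xi.\<close>
datatype gen = E nat | X | Xi

definition Gens :: "nat \<Rightarrow> gen set" where
  "Gens p = {E f | f. 1 \<le> f \<and> f \<le> p} \<union> {X, Xi}"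

text \<open>Left action of the generators of Psi on L_l.\<close>
fun Ll_act :: "nat \<Rightarrow> gen \<Rightarrow> bas \<Rightarrow> bas option" where
  "Ll_act p (E f) (k, l) = (if l = p - f then Some (k, l) else None)"
| "Ll_act p X (k, l) = (if l + 1 < p then Some (k, l + 1) else None)"
| "Ll_act p Xi (k, l) = (if \<not> k \<and> l + 1 < p then Some (True, l + 1) else None)"

text \<open>Right action of the generators of Psi on L_r.\<close>
fun Lr_act :: "nat \<Rightarrow> gen \<Rightarrow> bas \<Rightarrow> bas option" where
  "Lr_act p (E f) (k, l) = (if l = f - 1 then Some (k, l) else None)"
| "Lr_act p X (k, l) = (if l + 1 < p then Some (k, l + 1) else None)"
| "Lr_act p Xi (k, l) = (if \<not> k \<and> l + 1 < p then Some (True, l + 1) else None)"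

text \<open>Right action of t on L_l (x.x^l -> xi.x^l, xi.x^l -> 0).\<close>
fun Ll_t :: "bas \<Rightarrow> bas option" where
  "Ll_t (k, l) = (if \<not> k then Some (True, l) else None)"

text \<open>Left action of t on L_r (x^l.x -> x^l.xi, x^l.xi -> 0).\<close>
fun Lr_t :: "bas \<Rightarrow> bas option" where
  "Lr_t (k, l) = (if \<not> k then Some (True, l) else None)"

definition matof :: "(bas \<Rightarrow> bas option) \<Rightarrow> bas \<Rightarrow> bas \<Rightarrow> 'a::field" where
  "matof f c b = (if f b = Some c then 1 else 0)"

text \<open>The F-tensor product L_l (x)_F L_r: coordinate functions supported on Bas p x Bas p.\<close>
definition TS :: "nat \<Rightarrow> (bas \<times> bas \<Rightarrow> 'a::field) set" where
  "TS p = {w. \<forall>z. z \<notin> Bas p \<times> Bas p \<longrightarrow> w z = 0}"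

definition op1 :: "nat \<Rightarrow> (bas \<Rightarrow> bas \<Rightarrow> 'a::field) \<Rightarrow> (bas \<times> bas \<Rightarrow> 'a) \<Rightarrow> bas \<times> bas \<Rightarrow> 'a" where
  "op1 p P w = (\<lambda>(c, d). if (c, d) \<in> Bas p \<times> Bas p then (\<Sum>b\<in>Bas p. P c b * w (b, d)) else 0)"

definition op2 :: "nat \<Rightarrow> (bas \<Rightarrow> bas \<Rightarrow> 'a::field) \<Rightarrow> (bas \<times> bas \<Rightarrow> 'a) \<Rightarrow> bas \<times> bas \<Rightarrow> 'a" where
  "op2 p Q w = (\<lambda>(c, d). if (c, d) \<in> Bas p \<times> Bas p then (\<Sum>b\<in>Bas p. Q d b * w (c, b)) else 0)"

text \<open>The subspace of L_l (x)_F L_r spanned by (m.t) (x) n - m (x) (t.n), where the right action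
  of t on L_l is given by the matrix A and the left action of t on L_r by the matrix B.  L_l (x)_Lambda L_r is TS p modulo this subspace.\<close>
definition Krel :: "nat \<Rightarrow> (bas \<Rightarrow> bas \<Rightarrow> 'a::field) \<Rightarrow> (bas \<Rightarrow> bas \<Rightarrow> 'a) \<Rightarrow> (bas \<times> bas \<Rightarrow> 'a) set" where
  "Krel p A B = {(\<lambda>z. op1 p A w z - op2 p B w z) | w. w \<in> TS p}"

text \<open>Relations for M = L_l (x)_Lambda L_r and for L_l^theta (x)_Lambda L_r
  (right action of t on L_l replaced by its negative, since theta(t) = -t).\<close>
definition K_M :: "nat \<Rightarrow> (bas \<times> bas \<Rightarrow> 'a::field) set" where
  "K_M p = Krel p (matof Ll_t) (matof Lr_t)"

definition K_theta :: "nat \<Rightarrow> (bas \<times> bas \<Rightarrow> 'a::field) set" where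
  "K_theta p = Krel p (\<lambda>c b. - matof Ll_t c b) (matof Lr_t)"

text \<open>tau fixes the e_f and x and sends xi to -xi.\<close>
definition tau_sign :: "gen \<Rightarrow> 'a::field" where
  "tau_sign g = (if g = Xi then -1 else 1)"

end

theory Submission
  imports Defs
begin

lemma finite_Bas[simp]: "finite (Bas p)" by (simp add: Bas_def)

definition phi :: "(bas \<times> bas \<Rightarrow> 'a::field) \<Rightarrow> bas \<times> bas \<Rightarrow> 'a" where
  "phi w = (\<lambda>(c, d). (if fst d then -1 else 1) * w (c, d))"

lemma phi_app: "phi w (c,d) = (if fst d then -1 else 1) * w (c, d)"
  by (simp add: phi_def)

lemma phi_phi: "phi (phi w) = w"
  by (rule ext) (auto simp: phi_def)

lemma phi_TS: "w \<in> TS p \<Longrightarrow> phi w \<in> TS p"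
  by (auto simp: TS_def phi_def)

lemma phi_lin: "phi (\<lambda>z. c * v z + w z) = (\<lambda>z. c * phi v z + phi w z)"
  by (rule ext) (auto simp: phi_def algebra_simps)

lemma phi_diff: "phi (\<lambda>z. f z - g z) = (\<lambda>z. phi f z - phi g z)"
  by (rule ext) (auto simp: phi_def algebra_simps)

lemma phi_neg: "phi (\<lambda>z. - f z) = (\<lambda>z. - phi f z)"
  by (rule ext) (auto simp: phi_def algebra_simps)

lemma op1_TS: "op1 p P w \<in> TS p" by (auto simp: TS_def op1_def)
lemma op2_TS: "op2 p P w \<in> TS p" by (auto simp: TS_def op2_def)

lemma phi_op1: "phi (op1 p P w) = op1 p P (phi w)"
  by (rule ext) (auto simp: phi_def op1_def sum_distrib_left algebra_simps)

lemma phi_op2_gen: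
  assumes A: "\<And>d b. (if fst d then -1 else 1) * Q d b = (s::'a::field) * Q d b * (if fst b then -1 else 1)"
  shows "phi (op2 p Q w) = (\<lambda>z. s * op2 p Q (phi w) z)"
proof (rule ext, clarsimp)
  fix c d
  have "(if fst d then -1 else 1) * (\<Sum>b\<in>Bas p. Q d b * w (c, b))
      = (\<Sum>b\<in>Bas p. ((if fst d then -1 else 1) * Q d b) * w (c, b))"
    by (simp add: sum_distrib_left mult.assoc)
  also have "\<dots> = (\<Sum>b\<in>Bas p. s * (Q d b * ((if fst b then -1 else 1) * w (c, b))))"
    by (rule sum.cong[OF refl]) (simp only: A mult.assoc mult.left_commute)
  also have "\<dots> = s * (\<Sum>b\<in>Bas p. Q d b * phi w (c, b))"
    by (simp add: sum_distrib_left phi_app)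
  finally have e: "(if fst d then -1 else 1) * (\<Sum>b\<in>Bas p. Q d b * w (c, b)) = s * (\<Sum>b\<in>Bas p. Q d b * phi w (c, b))" .
  show "phi (op2 p Q w) (c, d) = s * op2 p Q (phi w) (c, d)"
    apply (subst phi_app)
    using e by (simp add: op2_def)
qed

lemma phi_op2_t: "phi (op2 p (matof Lr_t) w) = (\<lambda>z. (-1) * op2 p (matof Lr_t) (phi w) z)"
  by (rule phi_op2_gen) (auto simp: matof_def split: if_splits)

lemma phi_op2_act: "phi (op2 p (matof (Lr_act p g)) w) = (\<lambda>z. tau_sign g * op2 p (matof (Lr_act p g)) (phi w) z)"
  by (rule phi_op2_gen) (cases g; auto simp: matof_def tau_sign_def split: if_splits)

lemma op1_negm: "op1 p (\<lambda>c b. - P c b) w = (\<lambda>z. - op1 p P w z)"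
  by (rule ext) (auto simp: op1_def sum_negf)

lemma op1_neg: "op1 p P (\<lambda>z. - w z) = (\<lambda>z. - op1 p P w z)"
  by (rule ext) (auto simp: op1_def sum_negf)

lemma op2_neg: "op2 p P (\<lambda>z. - w z) = (\<lambda>z. - op2 p P w z)"
  by (rule ext) (auto simp: op2_def sum_negf)

lemma op1_diff: "op1 p P (\<lambda>z. f z - g z) = (\<lambda>z. op1 p P f z - op1 p P g z)"
  by (rule ext) (auto simp: op1_def sum_subtractf algebra_simps)

lemma op2_diff: "op2 p P (\<lambda>z. f z - g z) = (\<lambda>z. op2 p P f z - op2 p P g z)"
  by (rule ext) (auto simp: op2_def sum_subtractf algebra_simps)

lemma op1_op2: "op1 p P (op2 p Q w) = op2 p Q (op1 p P w)"
proof (rule ext, clarsimp)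
  fix c d
  have e: "(\<Sum>b\<in>Bas p. P c b * (\<Sum>a\<in>Bas p. Q d a * w (b, a))) =
        (\<Sum>a\<in>Bas p. Q d a * (\<Sum>b\<in>Bas p. P c b * w (b, a)))"
  proof -
    have "(\<Sum>b\<in>Bas p. P c b * (\<Sum>a\<in>Bas p. Q d a * w (b, a))) =
          (\<Sum>b\<in>Bas p. \<Sum>a\<in>Bas p. Q d a * (P c b * w (b, a)))"
      by (simp add: sum_distrib_left algebra_simps)
    also have "\<dots> = (\<Sum>a\<in>Bas p. \<Sum>b\<in>Bas p. Q d a * (P c b * w (b, a)))"
      by (rule sum.swap)
    also have "\<dots> = (\<Sum>a\<in>Bas p. Q d a * (\<Sum>b\<in>Bas p. P c b * w (b, a)))"
      by (simp add: sum_distrib_left)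
    finally show ?thesis .
  qed
  show "op1 p P (op2 p Q w) (c, d) = op2 p Q (op1 p P w) (c, d)"
    unfolding op1_def op2_def using e by (auto intro!: sum.cong)
qed

lemma op1_op1:
  assumes "\<And>c a. c \<in> Bas p \<Longrightarrow> a \<in> Bas p \<Longrightarrow> (\<Sum>b\<in>Bas p. P c b * Q b a) = (\<Sum>b\<in>Bas p. Q c b * P b a)"
  shows "op1 p P (op1 p Q w) = op1 p Q (op1 p P w)"
proof (rule ext, clarsimp)
  fix c d
  have "\<And>P Q. c \<in> Bas p \<Longrightarrow> d \<in> Bas p \<Longrightarrow> (\<Sum>b\<in>Bas p. P c b * (\<Sum>a\<in>Bas p. Q b a * w (a, d)))
        = (\<Sum>a\<in>Bas p. (\<Sum>b\<in>Bas p. P c b * Q b a) * w (a, d))"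
    apply (simp add: sum_distrib_left sum_distrib_right)
    apply (subst sum.swap)
    apply (auto simp: algebra_simps intro!: sum.cong)
    done
  then show "op1 p P (op1 p Q w) (c, d) = op1 p Q (op1 p P w) (c, d)"
    unfolding op1_def using assms by (auto intro!: sum.cong)
qed

lemma op2_op2:
  assumes "\<And>c a. c \<in> Bas p \<Longrightarrow> a \<in> Bas p \<Longrightarrow> (\<Sum>b\<in>Bas p. P c b * Q b a) = (\<Sum>b\<in>Bas p. Q c b * P b a)"
  shows "op2 p P (op2 p Q w) = op2 p Q (op2 p P w)"
proof (rule ext, clarsimp)
  fix c d
  have "\<And>P Q. c \<in> Bas p \<Longrightarrow> d \<in> Bas p \<Longrightarrow> (\<Sum>b\<in>Bas p. P d b * (\<Sum>a\<in>Bas p. Q b a * w (c, a)))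
        = (\<Sum>a\<in>Bas p. (\<Sum>b\<in>Bas p. P d b * Q b a) * w (c, a))"
    apply (simp add: sum_distrib_left sum_distrib_right)
    apply (subst sum.swap)
    apply (auto simp: algebra_simps intro!: sum.cong)
    done
  then show "op2 p P (op2 p Q w) (c, d) = op2 p Q (op2 p P w) (c, d)"
    unfolding op2_def using assms by (auto intro!: sum.cong)
qed

lemma sum_matof:
  "(\<Sum>b\<in>Bas p. matof f c b * matof g b a) =
   (if (\<exists>b\<in>Bas p. g a = Some b \<and> f b = Some c) then 1 else (0::'a::field))"
proof (cases "g a")
  case None
  then show ?thesis by (simp add: matof_def)
next
  case (Some b0)
  have "(\<Sum>b\<in>Bas p. matof f c b * matof g b a) = (\<Sum>b\<in>Bas p. if b = b0 then matof f c b else (0::'a))"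
    by (rule sum.cong) (auto simp: matof_def Some)
  then show ?thesis by (auto simp: Some matof_def)
qed

lemma comm_l: "c \<in> Bas p \<Longrightarrow> a \<in> Bas p \<Longrightarrow>
  (\<Sum>b\<in>Bas p. matof (Ll_act p g) c b * matof Ll_t b a) = (\<Sum>b\<in>Bas p. matof Ll_t c b * (matof (Ll_act p g) b a :: 'a::field))"
  unfolding sum_matof
  by (cases g; cases a; cases c; auto simp: Bas_def split: if_splits)

lemma comm_r: "c \<in> Bas p \<Longrightarrow> a \<in> Bas p \<Longrightarrow>
  (\<Sum>b\<in>Bas p. matof (Lr_act p g) c b * matof Lr_t b a) = (\<Sum>b\<in>Bas p. matof Lr_t c b * (matof (Lr_act p g) b a :: 'a::field))"
  unfolding sum_matof
  by (cases g; cases a; cases c; auto simp: Bas_def split: if_splits)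

lemma K_theta_alt: "K_theta p = {(\<lambda>z. - op1 p (matof Ll_t) w z - op2 p (matof Lr_t) w z) | w. w \<in> TS p}"
  unfolding K_theta_def Krel_def op1_negm by simp

lemma zero_K_M: "(\<lambda>z. 0) \<in> (K_M p :: (bas \<times> bas \<Rightarrow> 'a::field) set)"
proof -
  have t: "(\<lambda>_. 0::'a) \<in> TS p" by (simp add: TS_def)
  have e: "(\<lambda>z. 0::'a) = (\<lambda>z. op1 p (matof Ll_t) (\<lambda>_. 0::'a) z - op2 p (matof Lr_t) (\<lambda>_. 0::'a) z)"
    by (auto simp: op1_def op2_def)
  show ?thesis unfolding K_M_def Krel_def using t e by blast
qed

lemma TS_neg: "w \<in> TS p \<Longrightarrow> (\<lambda>z. - w z) \<in> TS p" by (auto simp: TS_def)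

lemma phi_K: "w \<in> TS p \<Longrightarrow> phi w \<in> K_M p \<longleftrightarrow> w \<in> (K_theta p :: (bas \<times> bas \<Rightarrow> 'a::field) set)"
proof
  assume "phi w \<in> K_M p"
  then obtain u where u: "u \<in> TS p" "phi w = (\<lambda>z. op1 p (matof Ll_t) u z - op2 p (matof Lr_t) u z)"
    unfolding K_M_def Krel_def by auto
  have "w = phi (phi w)" by (simp add: phi_phi)
  also have "\<dots> = (\<lambda>z. - op1 p (matof Ll_t) (\<lambda>z. - phi u z) z - op2 p (matof Lr_t) (\<lambda>z. - phi u z) z)"
    unfolding u(2) phi_diff phi_op1 phi_op2_t op1_neg op2_neg by simp
  finally show "w \<in> K_theta p" unfolding K_theta_alt using u(1) phi_TS TS_neg by blast
next
  assume "w \<in> K_theta p"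
  then obtain u where u: "u \<in> TS p" "w = (\<lambda>z. - op1 p (matof Ll_t) u z - op2 p (matof Lr_t) u z)"
    unfolding K_theta_alt by auto
  have "phi w = (\<lambda>z. op1 p (matof Ll_t) (\<lambda>z. - phi u z) z - op2 p (matof Lr_t) (\<lambda>z. - phi u z) z)"
    unfolding u(2) phi_diff phi_neg phi_op1 phi_op2_t op1_neg op2_neg by simp
  then show "phi w \<in> K_M p" unfolding K_M_def Krel_def using u(1) phi_TS TS_neg by blast
qed

theorem lemma28:
  fixes p :: nat
  assumes "p > 0" and "CHAR('a::field) = p"
  shows
    "(\<forall>g\<in>Gens p.
        op1 p (matof (Ll_act p g)) ` (K_theta p :: (bas \<times> bas \<Rightarrow> 'a) set) \<subseteq> K_theta p \<and>
        op2 p (matof (Lr_act p g)) ` (K_theta p :: (bas \<times> bas \<Rightarrow> 'a) set) \<subseteq> K_theta p)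
   \<and> (\<exists>\<phi> :: (bas \<times> bas \<Rightarrow> 'a) \<Rightarrow> (bas \<times> bas \<Rightarrow> 'a).
        \<phi> ` TS p \<subseteq> TS p
      \<and> (\<forall>v\<in>TS p. \<forall>w\<in>TS p. \<forall>c. \<phi> (\<lambda>z. c * v z + w z) = (\<lambda>z. c * \<phi> v z + \<phi> w z))
      \<and> (\<forall>w\<in>TS p. \<phi> w \<in> K_M p \<longleftrightarrow> w \<in> K_theta p)
      \<and> (\<forall>v\<in>TS p. \<exists>w\<in>TS p. (\<lambda>z. \<phi> w z - v z) \<in> K_M p)
      \<and> (\<forall>g\<in>Gens p. \<forall>w\<in>TS p.
           (\<lambda>z. \<phi> (op1 p (matof (Ll_act p g)) w) z - op1 p (matof (Ll_act p g)) (\<phi> w) z) \<in> K_M p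
         \<and> (\<lambda>z. \<phi> (op2 p (matof (Lr_act p g)) w) z
                - tau_sign g * op2 p (matof (Lr_act p g)) (\<phi> w) z) \<in> K_M p))"
proof (intro conjI)
  show "\<forall>g\<in>Gens p.
        op1 p (matof (Ll_act p g)) ` (K_theta p :: (bas \<times> bas \<Rightarrow> 'a) set) \<subseteq> K_theta p \<and>
        op2 p (matof (Lr_act p g)) ` (K_theta p :: (bas \<times> bas \<Rightarrow> 'a) set) \<subseteq> K_theta p"
  proof (intro ballI conjI subsetI)
    fix g and y :: "bas \<times> bas \<Rightarrow> 'a"
    assume "y \<in> op1 p (matof (Ll_act p g)) ` K_theta p"
    then obtain u where u: "u \<in> TS p" "y = op1 p (matof (Ll_act p g)) (\<lambda>z. - op1 p (matof Ll_t) u z - op2 p (matof Lr_t) u z)"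
      unfolding K_theta_alt by auto
    have c: "op1 p (matof (Ll_act p g)) (op1 p (matof Ll_t) u) = op1 p (matof Ll_t) (op1 p (matof (Ll_act p g)) u)"
      by (rule op1_op1) (rule comm_l)
    have "y = (\<lambda>z. - op1 p (matof Ll_t) (op1 p (matof (Ll_act p g)) u) z - op2 p (matof Lr_t) (op1 p (matof (Ll_act p g)) u) z)"
      unfolding u(2) op1_diff op1_neg c op1_op2 ..
    then show "y \<in> K_theta p" unfolding K_theta_alt using op1_TS by blast
  next
    fix g and y :: "bas \<times> bas \<Rightarrow> 'a"
    assume "y \<in> op2 p (matof (Lr_act p g)) ` K_theta p"
    then obtain u where u: "u \<in> TS p" "y = op2 p (matof (Lr_act p g)) (\<lambda>z. - op1 p (matof Ll_t) u z - op2 p (matof Lr_t) u z)"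
      unfolding K_theta_alt by auto
    have c: "op2 p (matof (Lr_act p g)) (op2 p (matof Lr_t) u) = op2 p (matof Lr_t) (op2 p (matof (Lr_act p g)) u)"
      by (rule op2_op2) (rule comm_r)
    have "y = (\<lambda>z. - op1 p (matof Ll_t) (op2 p (matof (Lr_act p g)) u) z - op2 p (matof Lr_t) (op2 p (matof (Lr_act p g)) u) z)"
      unfolding u(2) op2_diff op2_neg c op1_op2 ..
    then show "y \<in> K_theta p" unfolding K_theta_alt using op2_TS by blast
  qed
  show "\<exists>\<phi> :: (bas \<times> bas \<Rightarrow> 'a) \<Rightarrow> (bas \<times> bas \<Rightarrow> 'a).
        \<phi> ` TS p \<subseteq> TS p
      \<and> (\<forall>v\<in>TS p. \<forall>w\<in>TS p. \<forall>c. \<phi> (\<lambda>z. c * v z + w z) = (\<lambda>z. c * \<phi> v z + \<phi> w z))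
      \<and> (\<forall>w\<in>TS p. \<phi> w \<in> K_M p \<longleftrightarrow> w \<in> K_theta p)
      \<and> (\<forall>v\<in>TS p. \<exists>w\<in>TS p. (\<lambda>z. \<phi> w z - v z) \<in> K_M p)
      \<and> (\<forall>g\<in>Gens p. \<forall>w\<in>TS p.
           (\<lambda>z. \<phi> (op1 p (matof (Ll_act p g)) w) z - op1 p (matof (Ll_act p g)) (\<phi> w) z) \<in> K_M p
         \<and> (\<lambda>z. \<phi> (op2 p (matof (Lr_act p g)) w) z
                - tau_sign g * op2 p (matof (Lr_act p g)) (\<phi> w) z) \<in> K_M p)"
  proof (rule exI[of _ phi], intro conjI ballI allI)
    show "phi ` TS p \<subseteq> TS p" using phi_TS by blast
  next
    fix v w :: "bas \<times> bas \<Rightarrow> 'a" and c show "phi (\<lambda>z. c * v z + w z) = (\<lambda>z. c * phi v z + phi w z)"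
      by (rule phi_lin)
  next
    fix w :: "bas \<times> bas \<Rightarrow> 'a" assume "w \<in> TS p" then show "phi w \<in> K_M p \<longleftrightarrow> w \<in> K_theta p"
      by (rule phi_K)
  next
    fix v :: "bas \<times> bas \<Rightarrow> 'a" assume "v \<in> TS p"
    then show "\<exists>w\<in>TS p. (\<lambda>z. phi w z - v z) \<in> K_M p"
      by (intro bexI[of _ "phi v"]) (simp_all add: phi_phi zero_K_M phi_TS)
  next
    fix g w
    show "(\<lambda>z. phi (op1 p (matof (Ll_act p g)) w) z - op1 p (matof (Ll_act p g)) (phi w) z) \<in> (K_M p :: (bas \<times> bas \<Rightarrow> 'a) set)"
      by (simp add: phi_op1 zero_K_M)
    show "(\<lambda>z. phi (op2 p (matof (Lr_act p g)) w) z - tau_sign g * op2 p (matof (Lr_act p g)) (phi w) z) \<in> (K_M p :: (bas \<times> bas \<Rightarrow> 'a) set)"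
      by (simp add: phi_op2_act zero_K_M)
  qed
qed

end
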